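(* Let $k\ge2$, $a_1\in A_1$ and $b_1\in Ab$. Then the map $a\mapsto a_1$, $b\mapsto b_1$ extends to an automorphism of the group $BS(1,k)$.
   Context: $BS(1,k)=\langle a,b\mid b^{-1}ab=a^k\rangle$, identified with $\mathbb{Z}[1/k]\rtimes\mathbb{Z}$ (pairs $(y,m)$, $y\in\mathbb{Z}[1/k]=\{zk^i:z,i\in\mathbb{Z}\}$, $m\in\mathbb{Z}$, product $(y_1,m_1)(y_2,m_2)=(y_1+y_2k^{-m_1},m_1+m_2)$), with $a=(1,0)$, $b=(0,1)$. $A=\{(y,0): y\in\mathbb{Z}[1/k]\}$ is the normal closure of $a$; for $u=(y,0)\in A$ and $s\in\mathbb{Z}[1/k]$ write $u^s=(ys,0)$, so $A=\{a^y:y\in\mathbb{Z}[1/k]\}$. $A_1=\{a^y: y \text{ a unit of }\mathbb{Z}[1/k]\}$ and $Ab=\{a^yb: y\in\mathbb{Z}[1/k]\}$. *)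

theory Defs
  imports Complex_Main "HOL-Algebra.Group" "HOL-Algebra.Coset"
begin

text \<open>The ring Z[1/k] as a subset of the rationals: all z * k^i with z, i integers.\<close>
definition Zinv :: "int \<Rightarrow> rat set" where
  "Zinv k = {of_int z * (of_int k) powi i | z i. True}"

definition Zinv_units :: "int \<Rightarrow> rat set" where
  "Zinv_units k = {y \<in> Zinv k. \<exists>w \<in> Zinv k. y * w = 1}"

text \<open>BS(1,k) as Z[1/k] semidirect Z, pairs (y,m), product
  (y1,m1)(y2,m2) = (y1 + y2 k^(-m1), m1 + m2).\<close>
definition BS :: "int \<Rightarrow> (rat \<times> int) monoid" where
  "BS k = \<lparr> carrier = {(y, m). y \<in> Zinv k},
            mult = (\<lambda>(y1, m1) (y2, m2). (y1 + y2 * (of_int k) powi (- m1), m1 + m2)),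
            one = (0, 0) \<rparr>"

definition gen_a :: "rat \<times> int" where "gen_a = (1, 0)"
definition gen_b :: "rat \<times> int" where "gen_b = (0, 1)"

definition apow :: "rat \<Rightarrow> rat \<times> int" where "apow y = (y, 0)"

definition A1 :: "int \<Rightarrow> (rat \<times> int) set" where
  "A1 k = {apow y | y. y \<in> Zinv_units k}"

definition Ab :: "int \<Rightarrow> (rat \<times> int) set" where
  "Ab k = {apow y \<otimes>\<^bsub>BS k\<^esub> gen_b | y. y \<in> Zinv k}"

end

theory Submission
  imports Defs
begin

lemma geo_dvd: "(k::int) - 1 dvd k ^ n - 1"
proof (induction n)
  case 0 then show ?case by simp
next
  case (Suc n)
  have "k ^ Suc n - 1 = k * (k ^ n - 1) + (k - 1)" by (simp add: algebra_simps)
  then show ?case using Suc.IH by (metis dvd_add dvd_mult dvd_refl)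
qed

lemma Zinv_intI: "of_int z * (of_int k) powi i \<in> Zinv k"
  unfolding Zinv_def by blast

lemma Zinv_add:
  assumes k: "k \<noteq> 0" and "x \<in> Zinv k" "y \<in> Zinv k"
  shows "x + y \<in> Zinv k"
proof -
  obtain z1 i1 where x: "x = of_int z1 * (of_int k) powi i1" using assms unfolding Zinv_def by blast
  obtain z2 i2 where y: "y = of_int z2 * (of_int k) powi i2" using assms unfolding Zinv_def by blast
  define j where "j = min i1 i2"
  have K: "(of_int k :: rat) \<noteq> 0" using k by simp
  have p1: "(of_int k :: rat) powi (i1 - j) = of_int (k ^ nat (i1 - j))"
    by (simp add: j_def power_int_def)
  have p2: "(of_int k :: rat) powi (i2 - j) = of_int (k ^ nat (i2 - j))"
    by (simp add: j_def power_int_def)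
  have e1: "(of_int k :: rat) powi i1 = of_int (k ^ nat (i1 - j)) * of_int k powi j"
    using K power_int_add[of "of_int k :: rat" "i1 - j" j] p1 by simp
  have e2: "(of_int k :: rat) powi i2 = of_int (k ^ nat (i2 - j)) * of_int k powi j"
    using K power_int_add[of "of_int k :: rat" "i2 - j" j] p2 by simp
  have "x + y = of_int (z1 * k ^ nat (i1 - j) + z2 * k ^ nat (i2 - j)) * of_int k powi j"
    unfolding x y e1 e2 by (simp add: algebra_simps)
  then show ?thesis using Zinv_intI by metis
qed

lemma Zinv_mult:
  assumes k: "k \<noteq> 0" and "x \<in> Zinv k" "y \<in> Zinv k"
  shows "x * y \<in> Zinv k"
proof -
  obtain z1 i1 where x: "x = of_int z1 * (of_int k) powi i1" using assms unfolding Zinv_def by blast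
  obtain z2 i2 where y: "y = of_int z2 * (of_int k) powi i2" using assms unfolding Zinv_def by blast
  have K: "(of_int k :: rat) \<noteq> 0" using k by simp
  have "x * y = of_int (z1 * z2) * of_int k powi (i1 + i2)"
    unfolding x y using K by (simp add: power_int_add algebra_simps)
  then show ?thesis using Zinv_intI by metis
qed

lemma Zinv_neg: assumes "x \<in> Zinv k" shows "- x \<in> Zinv k"
proof -
  obtain z i where x: "x = of_int z * (of_int k) powi i" using assms unfolding Zinv_def by blast
  have "- x = of_int (- z) * (of_int k) powi i" using x by simp
  then show ?thesis using Zinv_intI by metis
qed

lemma Zinv_pow: "(of_int k :: rat) powi i \<in> Zinv k"
  using Zinv_intI[of 1 k i] by simp

lemma geo_Zinv:
  assumes k: "k \<ge> 2"
  shows "(of_int k :: rat) * (1 - of_int k powi (- m)) / (of_int k - 1) \<in> Zinv k"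
proof -
  define K :: rat where "K = of_int k"
  have K0: "K \<noteq> 0" and K1: "K - 1 \<noteq> 0" using k by (auto simp: K_def)
  obtain z where z: "k ^ nat \<bar>m\<bar> - 1 = (k - 1) * z" using geo_dvd[of k "nat \<bar>m\<bar>"] by (auto elim: dvdE)
  have zq: "K ^ nat \<bar>m\<bar> = 1 + (K - 1) * of_int z"
  proof -
    have "of_int (k ^ nat \<bar>m\<bar> - 1) = (of_int ((k - 1) * z) :: rat)" using z by simp
    then show ?thesis by (simp add: K_def algebra_simps)
  qed
  show ?thesis
  proof (cases "m \<ge> 0")
    case True
    have p: "K powi (- m) = inverse (K ^ nat \<bar>m\<bar>)" using True power_int_minus[of K m] power_int_of_nat[of K "nat m"] by simp
    have pn: "K ^ nat \<bar>m\<bar> \<noteq> 0" using K0 by simp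
    have "K * (1 - K powi (- m)) / (K - 1) = of_int z * K powi (1 - m)"
    proof -
      have "K powi (1 - m) = K * inverse (K ^ nat \<bar>m\<bar>)"
        using K0 p power_int_add[of K 1 "- m"] by simp
      moreover have "K * (1 - inverse (K ^ nat \<bar>m\<bar>)) / (K - 1) = of_int z * (K * inverse (K ^ nat \<bar>m\<bar>))"
      proof -
        define P where "P = K ^ nat \<bar>m\<bar>"
        have P0: "P \<noteq> 0" and Pz: "P = 1 + (K - 1) * of_int z" using pn zq by (auto simp: P_def)
        have "1 - inverse P = (K - 1) * of_int z / P" using P0 Pz by (simp add: field_simps)
        moreover have "K * ((K - 1) * of_int z / P) / (K - 1) = of_int z * (K * inverse P)"
          using K1 P0 by (simp add: field_simps)
        ultimately have "K * (1 - inverse P) / (K - 1) = of_int z * (K * inverse P)"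
          by simp
        then show ?thesis by (simp add: P_def)
      qed
      ultimately show ?thesis using p by simp
    qed
    then show ?thesis using Zinv_intI[of z k "1 - m"] by (simp add: K_def)
  next
    case False
    have p: "K powi (- m) = K ^ nat \<bar>m\<bar>" using False by (simp add: power_int_def)
    have "K * (1 - K powi (- m)) / (K - 1) = of_int (- z) * K powi 1"
      unfolding p zq using K1 by (simp add: field_simps)
    then show ?thesis using Zinv_intI[of "- z" k 1] by (simp add: K_def)
  qed
qed


definition GG :: "int \<Rightarrow> int \<Rightarrow> rat" where
  "GG k m = (of_int k :: rat) * (1 - of_int k powi (- m)) / (of_int k - 1)"

lemma GG_add:
  assumes "k \<ge> 2"
  shows "GG k m1 + GG k m2 * (of_int k) powi (- m1) = GG k (m1 + m2)"
proof -
  define K :: rat where "K = of_int k"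
  have K0: "K \<noteq> 0" and K1: "K - 1 \<noteq> 0" using assms by (auto simp: K_def)
  have e: "K powi (- (m1 + m2)) = K powi (- m2) * K powi (- m1)"
    using K0 power_int_add[of K "- m2" "- m1"] by (simp add: add.commute)
  have gen: "K * (1 - a) / D + K * (1 - b) / D * a = K * (1 - b * a) / D" for a b D :: rat
  proof -
    have "K * (1 - a) / D + K * (1 - b) / D * a = (K * (1 - a) + K * (1 - b) * a) / D"
      by (simp add: add_divide_distrib)
    also have "K * (1 - a) + K * (1 - b) * a = K * (1 - b * a)" by (simp add: algebra_simps)
    finally show ?thesis .
  qed
  show ?thesis unfolding GG_def K_def[symmetric] e by (rule gen)
qed

lemma GG_0: "GG k 0 = 0" by (simp add: GG_def)

theorem lemma4p1:
  fixes k :: int and a1 b1 :: "rat \<times> int"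
  assumes "k \<ge> 2" and "a1 \<in> A1 k" and "b1 \<in> Ab k"
  shows "\<exists>\<phi>. \<phi> \<in> iso (BS k) (BS k) \<and> \<phi> gen_a = a1 \<and> \<phi> gen_b = b1"
proof -
  have k0: "k \<noteq> 0" using assms(1) by simp
  obtain u where a1: "a1 = (u, 0)" and u: "u \<in> Zinv k" and "\<exists>w \<in> Zinv k. u * w = 1"
    using assms(2) unfolding A1_def Zinv_units_def apow_def by blast
  then obtain w where w: "w \<in> Zinv k" and uw: "u * w = 1" by blast
  obtain c where b1: "b1 = (c, 1)" and c: "c \<in> Zinv k"
    using assms(3) unfolding Ab_def apow_def gen_b_def BS_def by auto
  have G: "GG k m \<in> Zinv k" for m using geo_Zinv[OF assms(1)] unfolding GG_def by blast
  define \<phi> where "\<phi> = (\<lambda>(y::rat, m::int). (u * y + c * GG k m, m))"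
  define \<psi> where "\<psi> = (\<lambda>(y::rat, m::int). (w * (y - c * GG k m), m))"
  have car: "carrier (BS k) = {(y, m). y \<in> Zinv k}" by (simp add: BS_def)
  have phi_in: "\<phi> \<in> carrier (BS k) \<rightarrow> carrier (BS k)"
  proof
    fix x assume "x \<in> carrier (BS k)"
    then obtain y m where x: "x = (y, m)" and y: "y \<in> Zinv k" unfolding car by blast
    have "u * y + c * GG k m \<in> Zinv k"
      using Zinv_add[OF k0 Zinv_mult[OF k0 u y] Zinv_mult[OF k0 c G]] .
    then show "\<phi> x \<in> carrier (BS k)" unfolding x car \<phi>_def by simp
  qed
  have psi_in: "\<psi> \<in> carrier (BS k) \<rightarrow> carrier (BS k)"
  proof
    fix x assume "x \<in> carrier (BS k)"
    then obtain y m where x: "x = (y, m)" and y: "y \<in> Zinv k" unfolding car by blast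
    have "y + - (c * GG k m) \<in> Zinv k"
      using Zinv_add[OF k0 y Zinv_neg[OF Zinv_mult[OF k0 c G]]] .
    then have "w * (y - c * GG k m) \<in> Zinv k"
      using Zinv_mult[OF k0 w] by simp
    then show "\<psi> x \<in> carrier (BS k)" unfolding x car \<psi>_def by simp
  qed
  have uwt: "u * (w * t) = t" "w * (u * t) = t" for t
    using uw by (metis mult.assoc mult_1 mult.commute)+
  have bij: "bij_betw \<phi> (carrier (BS k)) (carrier (BS k))"
  proof (rule bij_betwI[OF phi_in psi_in])
    fix x assume "x \<in> carrier (BS k)"
    show "\<psi> (\<phi> x) = x" unfolding \<phi>_def \<psi>_def
      by (cases x) (simp add: uwt)
  next
    fix x assume "x \<in> carrier (BS k)"
    show "\<phi> (\<psi> x) = x" unfolding \<phi>_def \<psi>_def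
      by (cases x) (simp add: uwt)
  qed
  have hom: "\<phi> \<in> hom (BS k) (BS k)"
  proof (rule homI)
    fix x assume "x \<in> carrier (BS k)" then show "\<phi> x \<in> carrier (BS k)" using phi_in by blast
  next
    fix x y assume "x \<in> carrier (BS k)" "y \<in> carrier (BS k)"
    obtain y1 m1 where x: "x = (y1, m1)" by (cases x)
    obtain y2 m2 where y: "y = (y2, m2)" by (cases y)
    have "c * GG k (m1 + m2) = c * GG k m1 + c * GG k m2 * (of_int k) powi (- m1)"
      using GG_add[OF assms(1), of m1 m2] by (metis distrib_left mult.assoc)
    then show "\<phi> (x \<otimes>\<^bsub>BS k\<^esub> y) = \<phi> x \<otimes>\<^bsub>BS k\<^esub> \<phi> y"
      unfolding x y \<phi>_def by (simp add: BS_def algebra_simps)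
  qed
  have "\<phi> gen_a = a1" unfolding \<phi>_def gen_a_def a1 by (simp add: GG_0)
  moreover have "\<phi> gen_b = b1"
  proof -
    have "GG k 1 = 1" using assms(1) unfolding GG_def by (simp add: field_simps power_int_minus)
    then show ?thesis unfolding \<phi>_def gen_b_def b1 by simp
  qed
  ultimately show ?thesis using hom bij unfolding iso_def by blast
qed

end
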